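(* Let $\mathcal O[\lambda]$ be the algebra of polynomials in an indeterminate $\lambda$ (commuting with everything in $\mathcal O$) with coefficients in $\mathcal O$, and let $J$ be the 2-sided ideal of $\mathcal O[\lambda]$ generated by $(q-q^{-1})^2\xi_1\lambda+\xi_2$, where $\xi_1=XY-YX$ and $\xi_2=X^2Y^2-Y^2X^2+(q^2+q^{-2})(YXYX-XYXY)$. Then the $\mathbb F$-algebra $\Delta$ is isomorphic to $\mathcal O[\lambda]/J$ (via the map induced by $X\mapsto A$, $Y\mapsto B$, $\lambda\mapsto\gamma$).
   Context: Let $\mathbb F$ be a field and fix a nonzero $q\in\mathbb F$ with $q^4\neq 1$; $[3]_q=q^2+1+q^{-2}$. The universal Askey--Wilson algebra $\Delta$ is the associative $\mathbb F$-algebra with 1 with generators $A,B,C$ subject to the relations that each of $A+\frac{qBC-q^{-1}CB}{q^2-q^{-2}}$, $B+\frac{qCA-q^{-1}AC}{q^2-q^{-2}}$, $C+\frac{qAB-q^{-1}BA}{q^2-q^{-2}}$ is central; $\gamma$ denotes the third of these central elements multiplied by $q+q^{-1}$. The $q$-Onsager algebra $\mathcal O$ is the $\mathbb F$-algebra with generators $X,Y$ and relations $X^3Y-[3]_q X^2YX+[3]_q XYX^2-YX^3 = -(q^2-q^{-2})^2(XY-YX)$ and $Y^3X-[3]_q Y^2XY+[3]_q YXY^2-XY^3 = -(q^2-q^{-2})^2(YX-XY)$. *)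

theory Defs
  imports Main
begin

text \<open>An element of the free associative algebra over the field 'k on the
generator set 'g is a finitely supported function from words ('g list) to 'k
(the coefficient of each word).  Functions that are not finitely supported
are excluded by the predicate fpoly.\<close>

type_synonym ('g, 'k) fa = "'g list \<Rightarrow> 'k"

definition fpoly :: "('g, 'k::zero) fa \<Rightarrow> bool" where
  "fpoly p \<longleftrightarrow> finite {w. p w \<noteq> 0}"

definition fa_add :: "('g, 'k::field) fa \<Rightarrow> ('g, 'k) fa \<Rightarrow> ('g, 'k) fa" (infixl "\<oplus>" 65) where
  "p \<oplus> q = (\<lambda>w. p w + q w)"

definition fa_sub :: "('g, 'k::field) fa \<Rightarrow> ('g, 'k) fa \<Rightarrow> ('g, 'k) fa" (infixl "\<ominus>" 65) where
  "p \<ominus> q = (\<lambda>w. p w - q w)"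

definition fa_smul :: "'k::field \<Rightarrow> ('g, 'k) fa \<Rightarrow> ('g, 'k) fa" (infixr "\<cdot>" 75) where
  "c \<cdot> p = (\<lambda>w. c * p w)"

definition fa_mul :: "('g, 'k::field) fa \<Rightarrow> ('g, 'k) fa \<Rightarrow> ('g, 'k) fa" (infixl "\<otimes>" 70) where
  "p \<otimes> q = (\<lambda>w. \<Sum>i\<le>length w. p (take i w) * q (drop i w))"

definition fa_const :: "'k::field \<Rightarrow> ('g, 'k) fa" where
  "fa_const c = (\<lambda>w. if w = [] then c else 0)"

definition fa_gen :: "'g \<Rightarrow> ('g, 'k::field) fa" where
  "fa_gen g = (\<lambda>w. if w = [g] then 1 else 0)"

definition fa_comm :: "('g, 'k::field) fa \<Rightarrow> ('g, 'k) fa \<Rightarrow> ('g, 'k) fa" where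
  "fa_comm a b = a \<otimes> b \<ominus> b \<otimes> a"

inductive_set fa_ideal :: "('g, 'k::field) fa set \<Rightarrow> ('g, 'k) fa set" for R where
  zero: "(\<lambda>_. 0) \<in> fa_ideal R"
| gen: "r \<in> R \<Longrightarrow> r \<in> fa_ideal R"
| add: "a \<in> fa_ideal R \<Longrightarrow> b \<in> fa_ideal R \<Longrightarrow> a \<oplus> b \<in> fa_ideal R"
| lmul: "a \<in> fa_ideal R \<Longrightarrow> fpoly p \<Longrightarrow> p \<otimes> a \<in> fa_ideal R"
| rmul: "a \<in> fa_ideal R \<Longrightarrow> fpoly p \<Longrightarrow> a \<otimes> p \<in> fa_ideal R"

fun fa_word :: "('g \<Rightarrow> ('h, 'k::field) fa) \<Rightarrow> 'g list \<Rightarrow> ('h, 'k) fa" where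
  "fa_word \<phi> [] = fa_const 1"
| "fa_word \<phi> (g # w) = \<phi> g \<otimes> fa_word \<phi> w"

definition fa_hom :: "('g \<Rightarrow> ('h, 'k::field) fa) \<Rightarrow> ('g, 'k) fa \<Rightarrow> ('h, 'k) fa" where
  "fa_hom \<phi> p = (\<lambda>v. \<Sum>w\<in>{w. p w \<noteq> 0}. p w * fa_word \<phi> w v)"

datatype gD = GA | GB | GC

abbreviation "A \<equiv> (fa_gen GA :: (gD, 'k::field) fa)"
abbreviation "B \<equiv> (fa_gen GB :: (gD, 'k::field) fa)"
abbreviation "C \<equiv> (fa_gen GC :: (gD, 'k::field) fa)"

text \<open>The three elements required to be central.\<close>
definition omegaA :: "'k::field \<Rightarrow> (gD, 'k) fa" where
  "omegaA q = A \<oplus> inverse (q^2 - inverse q ^ 2) \<cdot> (q \<cdot> (B \<otimes> C) \<ominus> inverse q \<cdot> (C \<otimes> B))"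
definition omegaB :: "'k::field \<Rightarrow> (gD, 'k) fa" where
  "omegaB q = B \<oplus> inverse (q^2 - inverse q ^ 2) \<cdot> (q \<cdot> (C \<otimes> A) \<ominus> inverse q \<cdot> (A \<otimes> C))"
definition omegaC :: "'k::field \<Rightarrow> (gD, 'k) fa" where
  "omegaC q = C \<oplus> inverse (q^2 - inverse q ^ 2) \<cdot> (q \<cdot> (A \<otimes> B) \<ominus> inverse q \<cdot> (B \<otimes> A))"

definition gammaD :: "'k::field \<Rightarrow> (gD, 'k) fa" where
  "gammaD q = (q + inverse q) \<cdot> omegaC q"

definition rels_Delta :: "'k::field \<Rightarrow> (gD, 'k) fa set" where
  "rels_Delta q = {fa_comm (w q) (fa_gen g) | w g. w \<in> {omegaA, omegaB, omegaC}}"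

datatype gO = GX | GY | GL

abbreviation "X \<equiv> (fa_gen GX :: (gO, 'k::field) fa)"
abbreviation "Y \<equiv> (fa_gen GY :: (gO, 'k::field) fa)"
abbreviation "L \<equiv> (fa_gen GL :: (gO, 'k::field) fa)"

definition qbr3 :: "'k::field \<Rightarrow> 'k" where
  "qbr3 q = q^2 + 1 + inverse q ^ 2"

text \<open>q-Dolan--Grady relations, written as LHS - RHS.\<close>
definition relO1 :: "'k::field \<Rightarrow> (gO, 'k) fa" where
  "relO1 q = (X \<otimes> X \<otimes> X \<otimes> Y \<ominus> qbr3 q \<cdot> (X \<otimes> X \<otimes> Y \<otimes> X) \<oplus> qbr3 q \<cdot> (X \<otimes> Y \<otimes> X \<otimes> X)
     \<ominus> Y \<otimes> X \<otimes> X \<otimes> X) \<oplus> (q^2 - inverse q ^ 2)^2 \<cdot> (X \<otimes> Y \<ominus> Y \<otimes> X)"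
definition relO2 :: "'k::field \<Rightarrow> (gO, 'k) fa" where
  "relO2 q = (Y \<otimes> Y \<otimes> Y \<otimes> X \<ominus> qbr3 q \<cdot> (Y \<otimes> Y \<otimes> X \<otimes> Y) \<oplus> qbr3 q \<cdot> (Y \<otimes> X \<otimes> Y \<otimes> Y)
     \<ominus> X \<otimes> Y \<otimes> Y \<otimes> Y) \<oplus> (q^2 - inverse q ^ 2)^2 \<cdot> (Y \<otimes> X \<ominus> X \<otimes> Y)"

definition xi1 :: "(gO, 'k::field) fa" where
  "xi1 = X \<otimes> Y \<ominus> Y \<otimes> X"
definition xi2 :: "'k::field \<Rightarrow> (gO, 'k) fa" where
  "xi2 q = X \<otimes> X \<otimes> Y \<otimes> Y \<ominus> Y \<otimes> Y \<otimes> X \<otimes> X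
     \<oplus> (q^2 + inverse q ^ 2) \<cdot> (Y \<otimes> X \<otimes> Y \<otimes> X \<ominus> X \<otimes> Y \<otimes> X \<otimes> Y)"

definition Jgen :: "'k::field \<Rightarrow> (gO, 'k) fa" where
  "Jgen q = (q - inverse q)^2 \<cdot> (xi1 \<otimes> L) \<oplus> xi2 q"

text \<open>O[lambda]/J = free algebra on X,Y,lambda modulo: the O relations,
lambda commuting with X and Y, and the generator of J.\<close>
definition rels_OJ :: "'k::field \<Rightarrow> (gO, 'k) fa set" where
  "rels_OJ q = {relO1 q, relO2 q, fa_comm L X, fa_comm L Y, Jgen q}"

definition phi :: "'k::field \<Rightarrow> gO \<Rightarrow> (gD, 'k) fa" where
  "phi q g = (case g of GX \<Rightarrow> A | GY \<Rightarrow> B | GL \<Rightarrow> gammaD q)"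

end

theory Submission
  imports Defs
begin


definition ev :: "('k::field \<times> 'g list) list \<Rightarrow> ('g,'k) fa" where
  "ev xs = (\<lambda>w. sum_list (map fst (filter (\<lambda>p. snd p = w) xs)))"

definition mulL :: "('k::field \<times> 'g list) list \<Rightarrow> ('k \<times> 'g list) list \<Rightarrow> ('k \<times> 'g list) list" where
  "mulL xs ys = concat (map (\<lambda>(a,u). map (\<lambda>(b,v). (a*b, u@v)) ys) xs)"

definition smL :: "'k::field \<Rightarrow> ('k \<times> 'g list) list \<Rightarrow> ('k \<times> 'g list) list" where
  "smL c xs = map (\<lambda>(a,u). (c*a,u)) xs"

abbreviation zf :: "('g,'k::field) fa" where "zf \<equiv> (\<lambda>_. 0)"

lemma ev_Nil: "ev [] = zf" by (simp add: ev_def)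
lemma ev_append: "ev (xs@ys) = ev xs \<oplus> ev ys" by (simp add: ev_def fa_add_def fun_eq_iff)
lemma ev_Cons: "ev (x#xs) = ev [x] \<oplus> ev xs" using ev_append[of "[x]" xs] by simp
lemma ev_single: "ev [(a,u)] = (\<lambda>w. if u = w then a else 0)" by (simp add: ev_def fun_eq_iff)
lemma ev_smL: "c \<cdot> ev xs = ev (smL c xs)"
  by (induction xs) (auto simp: ev_def fa_smul_def smL_def fun_eq_iff algebra_simps)
lemma ev_sub: "ev xs \<ominus> ev ys = ev (xs @ smL (-1) ys)"
  by (simp add: ev_append ev_smL[symmetric] fa_sub_def fa_add_def fa_smul_def fun_eq_iff)

lemma mul_add_right: "p \<otimes> (a \<oplus> b) = p \<otimes> a \<oplus> p \<otimes> b"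
  by (simp add: fa_mul_def fa_add_def fun_eq_iff distrib_left sum.distrib)
lemma mul_add_left: "(a \<oplus> b) \<otimes> p = a \<otimes> p \<oplus> b \<otimes> p"
  by (simp add: fa_mul_def fa_add_def fun_eq_iff distrib_right sum.distrib)
lemma mul_zero_right: "p \<otimes> zf = zf" by (simp add: fa_mul_def fun_eq_iff)
lemma mul_zero_left: "zf \<otimes> p = zf" by (simp add: fa_mul_def fun_eq_iff)
lemma add_zero_left: "zf \<oplus> p = p" by (simp add: fa_add_def)
lemma add_zero_right: "p \<oplus> zf = p" by (simp add: fa_add_def)

lemma ev_single_mul: "ev [(a,u)] \<otimes> ev [(b,v)] = ev [(a*b, u@v)]"
proof (rule ext)
  fix w
  have "(ev [(a,u)] \<otimes> ev [(b,v)]) w =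
     (\<Sum>i\<le>length w. (if u = take i w then a else 0) * (if v = drop i w then b else 0))"
    by (simp add: fa_mul_def ev_single)
  also have "\<dots> = (\<Sum>i\<le>length w. if i = length u then (if u@v = w then a*b else 0) else 0)"
  proof (rule sum.cong[OF refl])
    fix i assume i: "i \<in> {..length w}"
    show "(if u = take i w then a else 0) * (if v = drop i w then b else 0) =
          (if i = length u then (if u@v = w then a*b else 0) else 0)"
    proof (cases "u = take i w \<and> v = drop i w")
      case True
      then have e: "u @ v = w" by (metis append_take_drop_id)
      have "length u = i" using True i by (simp add: min_def)
      with e True show ?thesis by simp
    next
      case False
      have "\<not> (i = length u \<and> u@v = w)"
      proof
        assume h: "i = length u \<and> u@v = w"
        then have "u = take i w \<and> v = drop i w" by auto
        then show False using False by blast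
      qed
      then show ?thesis using False by (auto split: if_splits)
    qed
  qed
  also have "\<dots> = (if u@v = w then a*b else 0)"
    by (auto simp: sum.delta)
  finally show "(ev [(a,u)] \<otimes> ev [(b,v)]) w = ev [(a*b, u@v)] w" by (simp add: ev_single)
qed

lemma ev_single_mul_list: "ev [(a,u)] \<otimes> ev ys = ev (map (\<lambda>(b,v). (a*b, u@v)) ys)"
proof (induction ys)
  case Nil then show ?case by (simp add: ev_Nil mul_zero_right)
next
  case (Cons y ys)
  obtain b v where y: "y = (b,v)" by force
  have "ev [(a,u)] \<otimes> ev (y#ys) = ev [(a,u)] \<otimes> ev [y] \<oplus> ev [(a,u)] \<otimes> ev ys"
    by (subst ev_Cons) (simp add: mul_add_right)
  also have "\<dots> = ev ([(a*b,u@v)] @ map (\<lambda>(b,v). (a*b, u@v)) ys)"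
    unfolding ev_append by (simp add: y ev_single_mul Cons)
  finally show ?case by (simp add: y)
qed

lemma ev_mul: "ev xs \<otimes> ev ys = ev (mulL xs ys)"
proof (induction xs)
  case Nil then show ?case by (simp add: ev_Nil mul_zero_left mulL_def)
next
  case (Cons x xs)
  obtain a u where x: "x = (a,u)" by force
  have "ev (x#xs) \<otimes> ev ys = ev [(a,u)] \<otimes> ev ys \<oplus> ev xs \<otimes> ev ys"
    by (subst ev_Cons) (simp add: x mul_add_left del: ev_Cons)
  also have "\<dots> = ev (mulL (x#xs) ys)"
    by (simp add: ev_single_mul_list Cons x mulL_def ev_append)
  finally show ?case .
qed


lemma const_ev: "fa_const c = ev [(c,[])]"
  by (auto simp: fa_const_def ev_single fun_eq_iff)
lemma gen_ev: "fa_gen g = ev [(1,[g])]"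
  by (auto simp: fa_gen_def ev_single fun_eq_iff)

lemma mulL_append: "mulL (xs @ ys) zs = mulL xs zs @ mulL ys zs"
  by (simp add: mulL_def)
lemma mulL_Cons: "mulL ((a,u)#xs) ys = map (\<lambda>(b,v). (a*b, u@v)) ys @ mulL xs ys"
  by (simp add: mulL_def)
lemma mulL_Nil: "mulL [] ys = []" by (simp add: mulL_def)
lemma mulL_map: "mulL (map (\<lambda>(b,v). (a*b, u@v)) ys) zs = map (\<lambda>(b,v). (a*b, u@v)) (mulL ys zs)"
  by (induction ys) (auto simp: mulL_def mult.assoc)
lemma mulL_assoc: "mulL (mulL xs ys) zs = mulL xs (mulL ys zs)"
proof (induction xs)
  case Nil then show ?case by (simp add: mulL_Nil)
next
  case (Cons x xs)
  obtain a u where x: "x = (a,u)" by force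
  show ?case by (simp add: x mulL_Cons mulL_append mulL_map Cons)
qed
lemma mulL_unit_left: "mulL [(1,[])] ys = ys"
  by (induction ys) (auto simp: mulL_def)
lemma mulL_unit_right: "mulL xs [(1,[])] = xs"
  by (induction xs) (auto simp: mulL_def)

lemma fpoly_ev: "fpoly (ev xs)"
proof -
  have "{w. ev xs w \<noteq> 0} \<subseteq> set (map snd xs)"
  proof
    fix w assume "w \<in> {w. ev xs w \<noteq> 0}"
    then have "filter (\<lambda>p. snd p = w) xs \<noteq> []" by (auto simp: ev_def)
    then show "w \<in> set (map snd xs)" by (auto simp: filter_empty_conv)
  qed
  then show ?thesis unfolding fpoly_def by (rule finite_subset) simp
qed

lemma ev_distinct: "distinct l \<Longrightarrow> ev (map (\<lambda>w. (p w, w)) l) w = (if w \<in> set l then p w else 0)"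
  by (induction l) (auto simp: ev_def)

lemma fpoly_ex_ev: assumes "fpoly p" shows "\<exists>xs. p = ev xs"
proof -
  obtain l where l: "set l = {w. p w \<noteq> 0}" "distinct l"
    using assms finite_distinct_list unfolding fpoly_def by blast
  have "p = ev (map (\<lambda>w. (p w, w)) l)"
    by (rule ext) (auto simp: ev_distinct l)
  then show ?thesis by blast
qed

lemma fpoly_iff: "fpoly p \<longleftrightarrow> (\<exists>xs. p = ev xs)"
  using fpoly_ex_ev fpoly_ev by blast

lemma fpoly_add: "fpoly a \<Longrightarrow> fpoly b \<Longrightarrow> fpoly (a \<oplus> b)"
  by (auto simp: fpoly_iff ev_append[symmetric])
lemma fpoly_mul: "fpoly a \<Longrightarrow> fpoly b \<Longrightarrow> fpoly (a \<otimes> b)"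
  by (auto simp: fpoly_iff ev_mul)
lemma fpoly_smul: "fpoly a \<Longrightarrow> fpoly (c \<cdot> a)"
  by (auto simp: fpoly_iff ev_smL)
lemma fpoly_sub: "fpoly a \<Longrightarrow> fpoly b \<Longrightarrow> fpoly (a \<ominus> b)"
  by (auto simp: fpoly_iff ev_sub)
lemma fpoly_gen: "fpoly (fa_gen g)" by (simp add: gen_ev fpoly_ev)
lemma fpoly_const: "fpoly (fa_const c)" by (simp add: const_ev fpoly_ev)
lemma fpoly_zero: "fpoly zf" by (simp add: fpoly_def)
lemma fpoly_comm: "fpoly a \<Longrightarrow> fpoly b \<Longrightarrow> fpoly (fa_comm a b)"
  by (simp add: fa_comm_def fpoly_sub fpoly_mul)

lemma mul_assoc: "fpoly a \<Longrightarrow> fpoly b \<Longrightarrow> fpoly c \<Longrightarrow> (a \<otimes> b) \<otimes> c = a \<otimes> (b \<otimes> c)"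
  by (auto simp: fpoly_iff ev_mul mulL_assoc)
lemma unit_left: "fpoly a \<Longrightarrow> fa_const 1 \<otimes> a = a"
  by (auto simp: fpoly_iff const_ev ev_mul mulL_unit_left)
lemma unit_right: "fpoly a \<Longrightarrow> a \<otimes> fa_const 1 = a"
  by (auto simp: fpoly_iff const_ev ev_mul mulL_unit_right)

lemma smul_mul_left: "(c \<cdot> a) \<otimes> b = c \<cdot> (a \<otimes> b)"
  by (simp add: fa_smul_def fa_mul_def fun_eq_iff sum_distrib_left mult.assoc)
lemma smul_mul_right: "a \<otimes> (c \<cdot> b) = c \<cdot> (a \<otimes> b)"
  by (simp add: fa_smul_def fa_mul_def fun_eq_iff sum_distrib_left algebra_simps)
lemma smul_add: "c \<cdot> (a \<oplus> b) = c \<cdot> a \<oplus> c \<cdot> b"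
  by (simp add: fa_smul_def fa_add_def fun_eq_iff algebra_simps)
lemma smul_smul: "c \<cdot> (d \<cdot> a) = (c*d) \<cdot> a"
  by (simp add: fa_smul_def fun_eq_iff)
lemma smul_zero: "c \<cdot> zf = zf" by (simp add: fa_smul_def)
lemma add_assoc: "(a \<oplus> b) \<oplus> c = a \<oplus> (b \<oplus> c)" by (simp add: fa_add_def add.assoc)
lemma sub_as_add: "a \<ominus> b = a \<oplus> (-1) \<cdot> b" by (simp add: fa_add_def fa_sub_def fa_smul_def fun_eq_iff)
lemma const_smul: "fa_const c = c \<cdot> fa_const 1" by (simp add: fa_const_def fa_smul_def fun_eq_iff)
lemma const_mul: "fpoly a \<Longrightarrow> fa_const c \<otimes> a = c \<cdot> a"
  by (subst const_smul) (simp add: smul_mul_left unit_left)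
lemma mul_const: "fpoly a \<Longrightarrow> a \<otimes> fa_const c = c \<cdot> a"
  by (subst const_smul) (simp add: smul_mul_right unit_right)


section \<open>Ideals\<close>

lemma mul_sub_left: "(a \<ominus> b) \<otimes> p = a \<otimes> p \<ominus> b \<otimes> p"
  by (simp add: fa_mul_def fa_sub_def fun_eq_iff left_diff_distrib sum_subtractf)
lemma mul_sub_right: "p \<otimes> (a \<ominus> b) = p \<otimes> a \<ominus> p \<otimes> b"
  by (simp add: fa_mul_def fa_sub_def fun_eq_iff right_diff_distrib sum_subtractf)

lemma ideal_fpoly: assumes R: "\<forall>r\<in>R. fpoly r" shows "a \<in> fa_ideal R \<Longrightarrow> fpoly a"
  by (induction rule: fa_ideal.induct) (auto simp: fpoly_zero fpoly_add fpoly_mul R)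

lemma ideal_smul: "(\<forall>r\<in>R. fpoly r) \<Longrightarrow> a \<in> fa_ideal R \<Longrightarrow> c \<cdot> a \<in> fa_ideal R"
  by (metis const_mul fa_ideal.lmul fpoly_const ideal_fpoly)
lemma ideal_sub: "(\<forall>r\<in>R. fpoly r) \<Longrightarrow> a \<in> fa_ideal R \<Longrightarrow> b \<in> fa_ideal R \<Longrightarrow> a \<ominus> b \<in> fa_ideal R"
  by (simp add: sub_as_add fa_ideal.add ideal_smul)

lemma comm_add: "fa_comm w (a \<oplus> b) = fa_comm w a \<oplus> fa_comm w b"
  unfolding fa_comm_def mul_add_left mul_add_right by (simp add: fa_add_def fa_sub_def fun_eq_iff)
lemma comm_smul: "fa_comm w (c \<cdot> a) = c \<cdot> fa_comm w a"
  unfolding fa_comm_def smul_mul_left smul_mul_right by (simp add: fa_smul_def fa_sub_def fun_eq_iff algebra_simps)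
lemma comm_mul: "fpoly w \<Longrightarrow> fpoly a \<Longrightarrow> fpoly b \<Longrightarrow>
   fa_comm w (a \<otimes> b) = fa_comm w a \<otimes> b \<oplus> a \<otimes> fa_comm w b"
  unfolding fa_comm_def mul_sub_left mul_sub_right
  by (simp add: mul_assoc fa_add_def fa_sub_def fun_eq_iff)
lemma comm_zero: "fa_comm w zf = zf"
  by (simp add: fa_comm_def mul_zero_left mul_zero_right fa_sub_def)
lemma comm_self: "fa_comm w w = zf"
  by (simp add: fa_comm_def fa_sub_def)
lemma comm_anti: "fa_comm a b = (-1) \<cdot> fa_comm b a"
  by (simp add: fa_comm_def fa_sub_def fa_smul_def fun_eq_iff)

lemma central:
  assumes R: "\<forall>r\<in>R. fpoly r" and w: "fpoly w"
    and g: "\<And>g. fa_comm w (fa_gen g) \<in> fa_ideal R" and p: "fpoly p"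
  shows "fa_comm w p \<in> fa_ideal R"
proof -
  have word: "fa_comm w (ev [(1,u)]) \<in> fa_ideal R" for u
  proof (induction u)
    case Nil
    have "fa_comm w (ev [(1,[])]) = zf"
      by (simp add: const_ev[symmetric] fa_comm_def unit_left unit_right w fa_sub_def)
    then show ?case by (simp add: fa_ideal.zero)
  next
    case (Cons g u)
    have e: "ev [(1, g#u)] = fa_gen g \<otimes> ev [(1,u)]"
      by (simp add: gen_ev ev_single_mul)
    show ?case unfolding e comm_mul[OF w fpoly_gen fpoly_ev]
      by (rule fa_ideal.add) (auto intro: fa_ideal.rmul fa_ideal.lmul g Cons fpoly_ev fpoly_gen)
  qed
  obtain xs where "p = ev xs" using p fpoly_ex_ev by blast
  moreover have "fa_comm w (ev xs) \<in> fa_ideal R"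
  proof (induction xs)
    case Nil then show ?case by (simp add: ev_Nil comm_zero fa_ideal.zero)
  next
    case (Cons x xs)
    obtain a u where x: "x = (a,u)" by force
    have e: "ev [(a,u)] = a \<cdot> ev [(1,u)]" by (simp add: ev_smL smL_def)
    show ?case
      by (subst ev_Cons) (simp add: x e comm_add comm_smul fa_ideal.add ideal_smul[OF R] word Cons del: ev_Cons)
  qed
  ultimately show ?thesis by simp
qed

section \<open>Homomorphisms\<close>

definition homL :: "('g \<Rightarrow> ('h,'k::field) fa) \<Rightarrow> ('k \<times> 'g list) list \<Rightarrow> ('h,'k) fa" where
  "homL \<phi> xs = foldr (\<lambda>(a,u) acc. a \<cdot> fa_word \<phi> u \<oplus> acc) xs zf"

lemma homL_Nil: "homL \<phi> [] = zf" by (simp add: homL_def)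
lemma homL_Cons: "homL \<phi> ((a,u)#xs) = a \<cdot> fa_word \<phi> u \<oplus> homL \<phi> xs" by (simp add: homL_def)

lemma homL_app: "homL \<phi> xs v = sum_list (map (\<lambda>(a,u). a * fa_word \<phi> u v) xs)"
  by (induction xs) (auto simp: homL_def fa_add_def fa_smul_def)

lemma sum_ev: "finite S \<Longrightarrow> set (map snd xs) \<subseteq> S \<Longrightarrow>
   (\<Sum>w\<in>S. ev xs w * f w) = sum_list (map (\<lambda>(a,u). a * f u) xs)"
proof (induction xs)
  case Nil then show ?case by (simp add: ev_def)
next
  case (Cons x xs)
  obtain a u where x: "x = (a,u)" by force
  have ev: "ev (x#xs) w = (if u = w then a else 0) + ev xs w" for w
    by (simp add: ev_def x)
  have "(\<Sum>w\<in>S. ev (x#xs) w * f w) = (\<Sum>w\<in>S. (if u = w then a * f w else 0)) + (\<Sum>w\<in>S. ev xs w * f w)"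
  proof -
    have "\<And>w. ev (x#xs) w * f w = (if u = w then a * f w else 0) + ev xs w * f w"
      by (simp add: ev distrib_right)
    then show ?thesis by (simp add: sum.distrib)
  qed
  also have "\<dots> = a * f u + sum_list (map (\<lambda>(a,u). a * f u) xs)"
    using Cons by (simp add: x sum.delta)
  finally show ?case by (simp add: x)
qed

lemma hom_ev: "fa_hom \<phi> (ev xs) = homL \<phi> xs"
proof (rule ext)
  fix v
  let ?S = "set (map snd xs)"
  have sub: "{w. ev xs w \<noteq> 0} \<subseteq> ?S"
  proof
    fix w assume "w \<in> {w. ev xs w \<noteq> 0}"
    then have "filter (\<lambda>p. snd p = w) xs \<noteq> []" by (auto simp: ev_def)
    then show "w \<in> ?S" by (auto simp: filter_empty_conv)
  qed
  have "fa_hom \<phi> (ev xs) v = (\<Sum>w\<in>?S. ev xs w * fa_word \<phi> w v)"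
    unfolding fa_hom_def by (rule sum.mono_neutral_left) (use sub in auto)
  also have "\<dots> = homL \<phi> xs v" by (simp add: sum_ev homL_app)
  finally show "fa_hom \<phi> (ev xs) v = homL \<phi> xs v" .
qed

context
  fixes \<phi> :: "'g \<Rightarrow> ('h,'k::field) fa"
  assumes phf: "\<And>g. fpoly (\<phi> g)"
begin

lemma fpoly_word: "fpoly (fa_word \<phi> u)"
  by (induction u) (auto simp: fpoly_const fpoly_mul phf)

lemma word_append: "fa_word \<phi> (u@v) = fa_word \<phi> u \<otimes> fa_word \<phi> v"
  by (induction u) (auto simp: unit_left fpoly_word mul_assoc phf)

lemma fpoly_homL: "fpoly (homL \<phi> xs)"
  by (induction xs) (auto simp: homL_def fpoly_zero fpoly_add fpoly_smul fpoly_word)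

lemma homL_append: "homL \<phi> (xs@ys) = homL \<phi> xs \<oplus> homL \<phi> ys"
  by (induction xs) (auto simp: homL_def add_zero_left add_assoc)

lemma homL_smL: "homL \<phi> (smL c xs) = c \<cdot> homL \<phi> xs"
  by (induction xs) (auto simp: homL_def smL_def smul_zero smul_add smul_smul)

lemma homL_map: "homL \<phi> (map (\<lambda>(b,v). (a*b, u@v)) ys) = (a \<cdot> fa_word \<phi> u) \<otimes> homL \<phi> ys"
proof (induction ys)
  case Nil then show ?case by (simp add: homL_Nil mul_zero_right)
next
  case (Cons y ys)
  obtain b v where y: "y = (b,v)" by force
  show ?case
    by (simp add: y homL_Cons Cons mul_add_right smul_mul_left smul_mul_right smul_smul word_append; simp add: mult.commute)
qed

lemma homL_mul: "homL \<phi> (mulL xs ys) = homL \<phi> xs \<otimes> homL \<phi> ys"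
proof (induction xs)
  case Nil then show ?case by (simp add: homL_Nil mulL_Nil mul_zero_left)
next
  case (Cons x xs)
  obtain a u where x: "x = (a,u)" by force
  show ?case by (simp add: x mulL_Cons homL_append homL_map Cons homL_Cons mul_add_left)
qed

lemma hom_add: "fpoly a \<Longrightarrow> fpoly b \<Longrightarrow> fa_hom \<phi> (a \<oplus> b) = fa_hom \<phi> a \<oplus> fa_hom \<phi> b"
  by (auto simp: fpoly_iff ev_append[symmetric] hom_ev homL_append)
lemma hom_smul: "fpoly a \<Longrightarrow> fa_hom \<phi> (c \<cdot> a) = c \<cdot> fa_hom \<phi> a"
  by (auto simp: fpoly_iff ev_smL hom_ev homL_smL)
lemma hom_mul: "fpoly a \<Longrightarrow> fpoly b \<Longrightarrow> fa_hom \<phi> (a \<otimes> b) = fa_hom \<phi> a \<otimes> fa_hom \<phi> b"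
  by (auto simp: fpoly_iff ev_mul hom_ev homL_mul)
lemma hom_sub: "fpoly a \<Longrightarrow> fpoly b \<Longrightarrow> fa_hom \<phi> (a \<ominus> b) = fa_hom \<phi> a \<ominus> fa_hom \<phi> b"
  by (simp add: sub_as_add hom_add hom_smul fpoly_smul)
lemma hom_gen: "fa_hom \<phi> (fa_gen g) = \<phi> g"
  by (simp add: gen_ev hom_ev homL_Cons homL_Nil add_zero_right unit_right phf fa_smul_def)
lemma hom_const: "fa_hom \<phi> (fa_const c) = fa_const c"
  unfolding const_ev hom_ev by (simp add: homL_Cons homL_Nil add_zero_right fa_smul_def ev_single fa_const_def fun_eq_iff)
lemma hom_zero: "fa_hom \<phi> zf = zf"
  by (simp add: fa_hom_def)
lemma hom_comm: "fpoly a \<Longrightarrow> fpoly b \<Longrightarrow> fa_hom \<phi> (fa_comm a b) = fa_comm (fa_hom \<phi> a) (fa_hom \<phi> b)"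
  by (simp add: fa_comm_def hom_sub hom_mul fpoly_mul)
lemma fpoly_hom: "fpoly a \<Longrightarrow> fpoly (fa_hom \<phi> a)"
  by (auto simp: fpoly_iff hom_ev fpoly_homL[unfolded fpoly_iff])

lemma hom_ideal:
  assumes R: "\<forall>r\<in>R. fpoly r" and S: "\<forall>r\<in>S. fpoly r"
    and rel: "\<And>r. r \<in> R \<Longrightarrow> fa_hom \<phi> r \<in> fa_ideal S"
  shows "p \<in> fa_ideal R \<Longrightarrow> fa_hom \<phi> p \<in> fa_ideal S"
proof (induction rule: fa_ideal.induct)
  case zero then show ?case by (simp add: hom_zero fa_ideal.zero)
next
  case (gen r) then show ?case by (rule rel)
next
  case (add a b) then show ?case
    by (simp add: hom_add ideal_fpoly[OF R] fa_ideal.add)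
next
  case (lmul a p) then show ?case
    by (simp add: hom_mul ideal_fpoly[OF R] fa_ideal.lmul fpoly_hom)
next
  case (rmul a p) then show ?case
    by (simp add: hom_mul ideal_fpoly[OF R] fa_ideal.rmul fpoly_hom)
qed

end

lemma word_gen: "fa_word fa_gen u = ev [(1,u)]"
  by (induction u) (auto simp: const_ev gen_ev ev_mul mulL_def)

lemma hom_gen_id: "fpoly p \<Longrightarrow> fa_hom fa_gen p = p"
proof -
  assume "fpoly p"
  then obtain xs where p: "p = ev xs" using fpoly_ex_ev by blast
  have "homL fa_gen xs = ev xs"
  proof (induction xs)
    case Nil then show ?case by (simp add: homL_Nil ev_Nil)
  next
    case (Cons x xs)
    obtain a u where x: "x = (a,u)" by force
    show ?case by (subst ev_Cons) (simp add: x homL_Cons word_gen Cons ev_smL smL_def del: ev_Cons)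
  qed
  then show ?thesis by (simp add: p hom_ev)
qed

lemma hom_hom:
  assumes phf: "\<And>g. fpoly (\<phi> g)" and psf: "\<And>g. fpoly (\<psi> g)"
    and inv: "\<And>g. fa_hom \<psi> (\<phi> g) = fa_gen g" and p: "fpoly p"
  shows "fa_hom \<psi> (fa_hom \<phi> p) = p"
proof -
  obtain xs where px: "p = ev xs" using p fpoly_ex_ev by blast
  have w: "fa_hom \<psi> (fa_word \<phi> u) = fa_word fa_gen u" for u
    by (induction u) (auto simp: hom_const[OF psf] hom_mul[OF psf] fpoly_word[OF phf] phf inv)
  have "fa_hom \<psi> (homL \<phi> xs) = homL fa_gen xs"
    by (induction xs) (auto simp: homL_Nil homL_Cons hom_zero[OF psf] hom_add[OF psf] hom_smul[OF psf]
        fpoly_smul fpoly_word[OF phf] fpoly_homL[OF phf] w)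
  moreover have "homL fa_gen xs = p"
    using hom_gen_id[OF p] by (simp add: px hom_ev)
  ultimately show ?thesis by (simp add: px hom_ev)
qed



lemma ev_eqI: "list_all (\<lambda>w. ev xs w = ev ys w) (remdups (map snd (xs @ ys))) \<Longrightarrow> ev xs = ev ys"
proof (rule ext)
  fix w assume h: "list_all (\<lambda>w. ev xs w = ev ys w) (remdups (map snd (xs @ ys)))"
  show "ev xs w = ev ys w"
  proof (cases "w \<in> set (map snd (xs @ ys))")
    case True then show ?thesis using h by (simp add: list_all_iff)
  next
    case False
    then have "filter (\<lambda>p. snd p = w) xs = []" "filter (\<lambda>p. snd p = w) ys = []"
      by (auto simp: filter_empty_conv)
    then show ?thesis by (simp add: ev_def)
  qed
qed

lemmas reify = gen_ev const_ev ev_append[symmetric] ev_smL ev_sub ev_mul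

definition psi :: "'k::field \<Rightarrow> gD \<Rightarrow> (gO, 'k) fa" where
  "psi q g = (case g of GA \<Rightarrow> X | GB \<Rightarrow> Y | GC \<Rightarrow>
     inverse (q + inverse q) \<cdot> L \<ominus> inverse (q^2 - inverse q ^ 2) \<cdot> (q \<cdot> (X \<otimes> Y) \<ominus> inverse q \<cdot> (Y \<otimes> X)))"

lemma psf: "fpoly (psi q g)" by (simp add: psi_def fpoly_gen fpoly_add fpoly_smul fpoly_sub fpoly_mul split: gD.split)

lemmas homsimps = hom_add[OF psf] hom_smul[OF psf] hom_sub[OF psf] hom_mul[OF psf] hom_gen[OF psf] hom_comm[OF psf]
   fpoly_gen fpoly_add fpoly_smul fpoly_sub fpoly_mul fpoly_comm fpoly_const

lemma hA: "fa_hom (psi q) (omegaA q) = psi q GA \<oplus> inverse (q^2 - inverse q ^ 2) \<cdot> (q \<cdot> (psi q GB \<otimes> psi q GC) \<ominus> inverse q \<cdot> (psi q GC \<otimes> psi q GB))"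
  by (simp add: omegaA_def homsimps)
lemma hB: "fa_hom (psi q) (omegaB q) = psi q GB \<oplus> inverse (q^2 - inverse q ^ 2) \<cdot> (q \<cdot> (psi q GC \<otimes> psi q GA) \<ominus> inverse q \<cdot> (psi q GA \<otimes> psi q GC))"
  by (simp add: omegaB_def homsimps)
lemma hC: "fa_hom (psi q) (omegaC q) = psi q GC \<oplus> inverse (q^2 - inverse q ^ 2) \<cdot> (q \<cdot> (psi q GA \<otimes> psi q GB) \<ominus> inverse q \<cdot> (psi q GB \<otimes> psi q GA))"
  by (simp add: omegaC_def homsimps)

lemma scal:
  fixes q :: "'k::field"
  assumes q0: "q \<noteq> 0" and q4: "q^4 \<noteq> 1"
  shows "q * inverse q = 1" "(q^2 - inverse q^2) * inverse (q^2 - inverse q^2) = 1"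
        "(q + inverse q) * inverse (q + inverse q) = 1"
proof -
  show "q * inverse q = 1" using q0 by simp
  have "q^2 - inverse q^2 \<noteq> 0"
  proof
    assume "q^2 - inverse q^2 = 0"
    then have "q^2 * q^2 - (q * inverse q)^2 = 0"
      by (metis (no_types, opaque_lifting) mult_zero_right power_mult_distrib right_diff_distrib)
    then have "q^4 = 1" using q0 by (simp add: power2_eq_square power4_eq_xxxx mult.assoc)
    then show False using q4 by simp
  qed
  then show "(q^2 - inverse q^2) * inverse (q^2 - inverse q^2) = 1" by simp
  have "q^2 - inverse q^2 = (q + inverse q) * (q - inverse q)" by (simp add: power2_eq_square algebra_simps)
  with \<open>q^2 - inverse q^2 \<noteq> 0\<close> have "q + inverse q \<noteq> 0" by auto
  then show "(q + inverse q) * inverse (q + inverse q) = 1" by simp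
qed

lemma I1:
  fixes q :: "'k::field"
  assumes q0: "q \<noteq> 0" and q4: "q^4 \<noteq> 1"
  shows "fa_comm (fa_hom (psi q) (omegaC q)) X = inverse (q + inverse q) \<cdot> fa_comm L X"
proof -
  obtain qi k si where d: "inverse q = qi" "inverse (q^2 - qi^2) = k" "inverse (q + qi) = si" by blast
  have r: "q*qi = 1" "(q^2-qi^2)*k = 1" "(q+qi)*si = 1" using scal[OF q0 q4] d by auto
  show ?thesis
    unfolding hA hB hC psi_def gD.case Jgen_def xi1_def xi2_def fa_comm_def relO1_def relO2_def qbr3_def
    apply (simp only: reify)
    apply (rule ev_eqI)
    apply (simp add: ev_def mulL_def smL_def power_inverse[symmetric] d;
           ((intro conjI)?; (algebra | use r in algebra | simp add: r)))
    done
qed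

lemma I2:
  fixes q :: "'k::field"
  assumes q0: "q \<noteq> 0" and q4: "q^4 \<noteq> 1"
  shows "fa_comm (fa_hom (psi q) (omegaC q)) Y = inverse (q + inverse q) \<cdot> fa_comm L Y"
proof -
  obtain qi k si where d: "inverse q = qi" "inverse (q^2 - qi^2) = k" "inverse (q + qi) = si" by blast
  have r: "q*qi = 1" "(q^2-qi^2)*k = 1" "(q+qi)*si = 1" using scal[OF q0 q4] d by auto
  show ?thesis
    unfolding hA hB hC psi_def gD.case Jgen_def xi1_def xi2_def fa_comm_def relO1_def relO2_def qbr3_def
    apply (simp only: reify)
    apply (rule ev_eqI)
    apply (simp add: ev_def mulL_def smL_def power_inverse[symmetric] d;
           ((intro conjI)?; (algebra | use r in algebra | simp add: r)))
    done
qed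

lemma I3:
  fixes q :: "'k::field"
  assumes q0: "q \<noteq> 0" and q4: "q^4 \<noteq> 1"
  shows "fa_comm (fa_hom (psi q) (omegaA q)) Y = (- (inverse (q^2 - inverse q^2)^2)) \<cdot> relO2 q \<oplus> (inverse (q + inverse q)^2) \<cdot> (fa_comm L Y \<otimes> Y) \<oplus> (- (q * inverse (q^2 - inverse q^2) * inverse (q + inverse q))) \<cdot> (fa_comm L Y \<otimes> Y \<ominus> Y \<otimes> fa_comm L Y)"
proof -
  obtain qi k si where d: "inverse q = qi" "inverse (q^2 - qi^2) = k" "inverse (q + qi) = si" by blast
  have r: "q*qi = 1" "(q^2-qi^2)*k = 1" "(q+qi)*si = 1" using scal[OF q0 q4] d by auto
  show ?thesis
    unfolding hA hB hC psi_def gD.case Jgen_def xi1_def xi2_def fa_comm_def relO1_def relO2_def qbr3_def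
    apply (simp only: reify)
    apply (rule ev_eqI)
    apply (simp add: ev_def mulL_def smL_def power_inverse[symmetric] d;
           ((intro conjI)?; (algebra | use r in algebra | simp add: r)))
    done
qed

lemma I4:
  fixes q :: "'k::field"
  assumes q0: "q \<noteq> 0" and q4: "q^4 \<noteq> 1"
  shows "fa_comm (fa_hom (psi q) (omegaA q)) X = (- (inverse (q^2 - inverse q^2)^2)) \<cdot> Jgen q \<oplus> (- (inverse (q + inverse q)^2)) \<cdot> fa_comm L xi1 \<oplus> (inverse (q + inverse q)^2) \<cdot> (fa_comm L X \<otimes> Y) \<oplus> (- (q * inverse (q^2 - inverse q^2) * inverse (q + inverse q))) \<cdot> (fa_comm L Y \<otimes> X \<ominus> X \<otimes> fa_comm L Y)"
proof -
  obtain qi k si where d: "inverse q = qi" "inverse (q^2 - qi^2) = k" "inverse (q + qi) = si" by blast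
  have r: "q*qi = 1" "(q^2-qi^2)*k = 1" "(q+qi)*si = 1" using scal[OF q0 q4] d by auto
  show ?thesis
    unfolding hA hB hC psi_def gD.case Jgen_def xi1_def xi2_def fa_comm_def relO1_def relO2_def qbr3_def
    apply (simp only: reify)
    apply (rule ev_eqI)
    apply (simp add: ev_def mulL_def smL_def power_inverse[symmetric] d;
           ((intro conjI)?; (algebra | use r in algebra | simp add: r)))
    done
qed

lemma I5:
  fixes q :: "'k::field"
  assumes q0: "q \<noteq> 0" and q4: "q^4 \<noteq> 1"
  shows "fa_comm (fa_hom (psi q) (omegaB q)) X = (- (inverse (q^2 - inverse q^2)^2)) \<cdot> relO1 q \<oplus> (inverse (q + inverse q)^2) \<cdot> (fa_comm L X \<otimes> X) \<oplus> (inverse q * inverse (q^2 - inverse q^2) * inverse (q + inverse q)) \<cdot> (fa_comm L X \<otimes> X \<ominus> X \<otimes> fa_comm L X)"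
proof -
  obtain qi k si where d: "inverse q = qi" "inverse (q^2 - qi^2) = k" "inverse (q + qi) = si" by blast
  have r: "q*qi = 1" "(q^2-qi^2)*k = 1" "(q+qi)*si = 1" using scal[OF q0 q4] d by auto
  show ?thesis
    unfolding hA hB hC psi_def gD.case Jgen_def xi1_def xi2_def fa_comm_def relO1_def relO2_def qbr3_def
    apply (simp only: reify)
    apply (rule ev_eqI)
    apply (simp add: ev_def mulL_def smL_def power_inverse[symmetric] d;
           ((intro conjI)?; (algebra | use r in algebra | simp add: r)))
    done
qed

lemma I6:
  fixes q :: "'k::field"
  assumes q0: "q \<noteq> 0" and q4: "q^4 \<noteq> 1"
  shows "fa_comm (fa_hom (psi q) (omegaB q)) Y = (inverse (q^2 - inverse q^2)^2) \<cdot> Jgen q \<oplus> (inverse (q + inverse q)^2) \<cdot> fa_comm L xi1 \<oplus> (inverse (q + inverse q)^2) \<cdot> (fa_comm L Y \<otimes> X) \<oplus> (inverse q * inverse (q^2 - inverse q^2) * inverse (q + inverse q)) \<cdot> (fa_comm L X \<otimes> Y \<ominus> Y \<otimes> fa_comm L X)"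
proof -
  obtain qi k si where d: "inverse q = qi" "inverse (q^2 - qi^2) = k" "inverse (q + qi) = si" by blast
  have r: "q*qi = 1" "(q^2-qi^2)*k = 1" "(q+qi)*si = 1" using scal[OF q0 q4] d by auto
  show ?thesis
    unfolding hA hB hC psi_def gD.case Jgen_def xi1_def xi2_def fa_comm_def relO1_def relO2_def qbr3_def
    apply (simp only: reify)
    apply (rule ev_eqI)
    apply (simp add: ev_def mulL_def smL_def power_inverse[symmetric] d;
           ((intro conjI)?; (algebra | use r in algebra | simp add: r)))
    done
qed

lemma R1:
  fixes q :: "'k::field"
  assumes q0: "q \<noteq> 0" and q4: "q^4 \<noteq> 1"
  shows "(q + inverse q) \<cdot> fa_hom (psi q) (omegaC q) = L"
proof -
  obtain qi k si where d: "inverse q = qi" "inverse (q^2 - qi^2) = k" "inverse (q + qi) = si" by blast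
  have r: "q*qi = 1" "(q^2-qi^2)*k = 1" "(q+qi)*si = 1" using scal[OF q0 q4] d by auto
  show ?thesis
    unfolding hA hB hC psi_def gD.case Jgen_def xi1_def xi2_def fa_comm_def relO1_def relO2_def qbr3_def
    apply (simp only: reify)
    apply (rule ev_eqI)
    apply (simp add: ev_def mulL_def smL_def power_inverse[symmetric] d;
           ((intro conjI)?; (algebra | use r in algebra | simp add: r)))
    done
qed

lemma phf: "fpoly (phi q g)" by (simp add: phi_def gammaD_def omegaC_def fpoly_gen fpoly_add fpoly_smul fpoly_sub fpoly_mul split: gO.split)

lemmas homsimpsP = hom_add[OF phf] hom_smul[OF phf] hom_sub[OF phf] hom_mul[OF phf] hom_gen[OF phf] hom_comm[OF phf]

lemma hO1: "fa_hom (phi q) (relO1 q) = (A \<otimes> A \<otimes> A \<otimes> B \<ominus> qbr3 q \<cdot> (A \<otimes> A \<otimes> B \<otimes> A) \<oplus> qbr3 q \<cdot> (A \<otimes> B \<otimes> A \<otimes> A)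
     \<ominus> B \<otimes> A \<otimes> A \<otimes> A) \<oplus> (q^2 - inverse q ^ 2)^2 \<cdot> (A \<otimes> B \<ominus> B \<otimes> A)"
  by (simp add: relO1_def homsimpsP fpoly_gen fpoly_add fpoly_smul fpoly_sub fpoly_mul; simp add: phi_def)
lemma hO2: "fa_hom (phi q) (relO2 q) = (B \<otimes> B \<otimes> B \<otimes> A \<ominus> qbr3 q \<cdot> (B \<otimes> B \<otimes> A \<otimes> B) \<oplus> qbr3 q \<cdot> (B \<otimes> A \<otimes> B \<otimes> B)
     \<ominus> A \<otimes> B \<otimes> B \<otimes> B) \<oplus> (q^2 - inverse q ^ 2)^2 \<cdot> (B \<otimes> A \<ominus> A \<otimes> B)"
  by (simp add: relO2_def homsimpsP fpoly_gen fpoly_add fpoly_smul fpoly_sub fpoly_mul; simp add: phi_def)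
lemma hJ: "fa_hom (phi q) (Jgen q) = (q - inverse q)^2 \<cdot> ((A \<otimes> B \<ominus> B \<otimes> A) \<otimes> gammaD q) \<oplus> (A \<otimes> A \<otimes> B \<otimes> B \<ominus> B \<otimes> B \<otimes> A \<otimes> A
     \<oplus> (q^2 + inverse q ^ 2) \<cdot> (B \<otimes> A \<otimes> B \<otimes> A \<ominus> A \<otimes> B \<otimes> A \<otimes> B))"
  by (simp add: Jgen_def xi1_def xi2_def homsimpsP fpoly_gen fpoly_add fpoly_smul fpoly_sub fpoly_mul; simp add: phi_def)
lemma hLX: "fa_hom (phi q) (fa_comm L X) = fa_comm (gammaD q) A"
  by (simp add: homsimpsP fpoly_gen; simp add: phi_def)
lemma hLY: "fa_hom (phi q) (fa_comm L Y) = fa_comm (gammaD q) B"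
  by (simp add: homsimpsP fpoly_gen; simp add: phi_def)

lemma D1:
  fixes q :: "'k::field"
  assumes q0: "q \<noteq> 0" and q4: "q^4 \<noteq> 1"
  shows "fa_hom (phi q) (relO2 q) = (- ((q^2 - inverse q^2)^2)) \<cdot> fa_comm (omegaA q) B \<oplus> ((q^2 - inverse q^2)^2 * inverse (q + inverse q)) \<cdot> (fa_comm (omegaC q) B \<otimes> B) \<oplus> (- (q * (q^2 - inverse q^2))) \<cdot> (fa_comm (omegaC q) B \<otimes> B \<ominus> B \<otimes> fa_comm (omegaC q) B)"
proof -
  obtain qi k si where d: "inverse q = qi" "inverse (q^2 - qi^2) = k" "inverse (q + qi) = si" by blast
  have r: "q*qi = 1" "(q^2-qi^2)*k = 1" "(q+qi)*si = 1" using scal[OF q0 q4] d by auto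
  show ?thesis
    unfolding hO1 hO2 hJ gammaD_def omegaA_def omegaB_def omegaC_def fa_comm_def qbr3_def
    apply (simp only: reify)
    apply (rule ev_eqI)
    apply (simp add: ev_def mulL_def smL_def power_inverse[symmetric] d;
           ((intro conjI)?; (algebra | use r in algebra | simp add: r)))
    done
qed

lemma D2:
  fixes q :: "'k::field"
  assumes q0: "q \<noteq> 0" and q4: "q^4 \<noteq> 1"
  shows "fa_hom (phi q) (relO1 q) = (- ((q^2 - inverse q^2)^2)) \<cdot> fa_comm (omegaB q) A \<oplus> ((q^2 - inverse q^2)^2 * inverse (q + inverse q)) \<cdot> (fa_comm (omegaC q) A \<otimes> A) \<oplus> (inverse q * (q^2 - inverse q^2)) \<cdot> (fa_comm (omegaC q) A \<otimes> A \<ominus> A \<otimes> fa_comm (omegaC q) A)"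
proof -
  obtain qi k si where d: "inverse q = qi" "inverse (q^2 - qi^2) = k" "inverse (q + qi) = si" by blast
  have r: "q*qi = 1" "(q^2-qi^2)*k = 1" "(q+qi)*si = 1" using scal[OF q0 q4] d by auto
  show ?thesis
    unfolding hO1 hO2 hJ gammaD_def omegaA_def omegaB_def omegaC_def fa_comm_def qbr3_def
    apply (simp only: reify)
    apply (rule ev_eqI)
    apply (simp add: ev_def mulL_def smL_def power_inverse[symmetric] d;
           ((intro conjI)?; (algebra | use r in algebra | simp add: r)))
    done
qed

lemma D3:
  fixes q :: "'k::field"
  assumes q0: "q \<noteq> 0" and q4: "q^4 \<noteq> 1"
  shows "fa_hom (phi q) (Jgen q) = (- ((q^2 - inverse q^2)^2)) \<cdot> (fa_comm (omegaA q) A \<oplus> inverse (q + inverse q) \<cdot> fa_comm (omegaC q) (A \<otimes> B \<ominus> B \<otimes> A) \<oplus> (- inverse (q + inverse q)) \<cdot> (fa_comm (omegaC q) A \<otimes> B) \<oplus> (q * inverse (q^2 - inverse q^2)) \<cdot> (fa_comm (omegaC q) B \<otimes> A \<ominus> A \<otimes> fa_comm (omegaC q) B))"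
proof -
  obtain qi k si where d: "inverse q = qi" "inverse (q^2 - qi^2) = k" "inverse (q + qi) = si" by blast
  have r: "q*qi = 1" "(q^2-qi^2)*k = 1" "(q+qi)*si = 1" using scal[OF q0 q4] d by auto
  show ?thesis
    unfolding hO1 hO2 hJ gammaD_def omegaA_def omegaB_def omegaC_def fa_comm_def qbr3_def
    apply (simp only: reify)
    apply (rule ev_eqI)
    apply (simp add: ev_def mulL_def smL_def power_inverse[symmetric] d;
           ((intro conjI)?; (algebra | use r in algebra | simp add: r)))
    done
qed

lemma D4:
  fixes q :: "'k::field"
  assumes q0: "q \<noteq> 0" and q4: "q^4 \<noteq> 1"
  shows "fa_comm (gammaD q) A = (q + inverse q) \<cdot> fa_comm (omegaC q) A"
proof -
  obtain qi k si where d: "inverse q = qi" "inverse (q^2 - qi^2) = k" "inverse (q + qi) = si" by blast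
  have r: "q*qi = 1" "(q^2-qi^2)*k = 1" "(q+qi)*si = 1" using scal[OF q0 q4] d by auto
  show ?thesis
    unfolding hO1 hO2 hJ gammaD_def omegaA_def omegaB_def omegaC_def fa_comm_def qbr3_def
    apply (simp only: reify)
    apply (rule ev_eqI)
    apply (simp add: ev_def mulL_def smL_def power_inverse[symmetric] d;
           ((intro conjI)?; (algebra | use r in algebra | simp add: r)))
    done
qed

lemma D5:
  fixes q :: "'k::field"
  assumes q0: "q \<noteq> 0" and q4: "q^4 \<noteq> 1"
  shows "fa_comm (gammaD q) B = (q + inverse q) \<cdot> fa_comm (omegaC q) B"
proof -
  obtain qi k si where d: "inverse q = qi" "inverse (q^2 - qi^2) = k" "inverse (q + qi) = si" by blast
  have r: "q*qi = 1" "(q^2-qi^2)*k = 1" "(q+qi)*si = 1" using scal[OF q0 q4] d by auto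
  show ?thesis
    unfolding hO1 hO2 hJ gammaD_def omegaA_def omegaB_def omegaC_def fa_comm_def qbr3_def
    apply (simp only: reify)
    apply (rule ev_eqI)
    apply (simp add: ev_def mulL_def smL_def power_inverse[symmetric] d;
           ((intro conjI)?; (algebra | use r in algebra | simp add: r)))
    done
qed

lemma hR2: "fa_hom (phi q) (psi q GC) = inverse (q + inverse q) \<cdot> gammaD q \<ominus> inverse (q^2 - inverse q ^ 2) \<cdot> (q \<cdot> (A \<otimes> B) \<ominus> inverse q \<cdot> (B \<otimes> A))"
  by (simp add: psi_def homsimpsP fpoly_gen fpoly_add fpoly_smul fpoly_sub fpoly_mul; simp add: phi_def)

lemma R2:
  fixes q :: "'k::field"
  assumes q0: "q \<noteq> 0" and q4: "q^4 \<noteq> 1"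
  shows "fa_hom (phi q) (psi q GC) = C"
proof -
  obtain qi k si where d: "inverse q = qi" "inverse (q^2 - qi^2) = k" "inverse (q + qi) = si" by blast
  have r: "q*qi = 1" "(q^2-qi^2)*k = 1" "(q+qi)*si = 1" using scal[OF q0 q4] d by auto
  show ?thesis
    unfolding hR2 gammaD_def omegaC_def
    apply (simp only: reify)
    apply (rule ev_eqI)
    apply (simp add: ev_def mulL_def smL_def power_inverse[symmetric] d;
           ((intro conjI)?; (algebra | use r in algebra | simp add: r)))
    done
qed


lemmas fpolys = fpoly_gen fpoly_add fpoly_smul fpoly_sub fpoly_mul fpoly_comm fpoly_const

lemma fpR_O: "\<forall>r\<in>rels_OJ q. fpoly r"
  by (auto simp: rels_OJ_def relO1_def relO2_def Jgen_def xi1_def xi2_def fpolys)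
lemma fpR_D: "\<forall>r\<in>rels_Delta q. fpoly r"
  by (auto simp: rels_Delta_def omegaA_def omegaB_def omegaC_def fpolys)
lemma fp_omega: "fpoly (omegaA q)" "fpoly (omegaB q)" "fpoly (omegaC q)"
  by (auto simp: omegaA_def omegaB_def omegaC_def fpolys)

lemma genO: "relO1 q \<in> fa_ideal (rels_OJ q)" "relO2 q \<in> fa_ideal (rels_OJ q)"
  "fa_comm L X \<in> fa_ideal (rels_OJ q)" "fa_comm L Y \<in> fa_ideal (rels_OJ q)"
  "Jgen q \<in> fa_ideal (rels_OJ q)"
  by (auto intro: fa_ideal.gen simp: rels_OJ_def)

lemma Lcentral: "fpoly p \<Longrightarrow> fa_comm L p \<in> fa_ideal (rels_OJ q)"
proof (rule central[OF fpR_O fpoly_gen])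
  show "fa_comm L (fa_gen g) \<in> fa_ideal (rels_OJ q)" for g
    by (cases g) (auto simp: genO comm_self fa_ideal.zero)
qed

lemma smO: "a \<in> fa_ideal (rels_OJ q) \<Longrightarrow> c \<cdot> a \<in> fa_ideal (rels_OJ q)"
  by (rule ideal_smul[OF fpR_O])
lemma subO: "a \<in> fa_ideal (rels_OJ q) \<Longrightarrow> b \<in> fa_ideal (rels_OJ q) \<Longrightarrow> a \<ominus> b \<in> fa_ideal (rels_OJ q)"
  by (rule ideal_sub[OF fpR_O])
lemma smD: "a \<in> fa_ideal (rels_Delta q) \<Longrightarrow> c \<cdot> a \<in> fa_ideal (rels_Delta q)"
  by (rule ideal_smul[OF fpR_D])
lemma subD: "a \<in> fa_ideal (rels_Delta q) \<Longrightarrow> b \<in> fa_ideal (rels_Delta q) \<Longrightarrow> a \<ominus> b \<in> fa_ideal (rels_Delta q)"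
  by (rule ideal_sub[OF fpR_D])

context
  fixes q :: "'k::field"
  assumes q0: "q \<noteq> 0" and q4: "q^4 \<noteq> 1"
begin

lemma LYm: "fa_comm L Y \<otimes> Y \<in> fa_ideal (rels_OJ q)" "Y \<otimes> fa_comm L Y \<in> fa_ideal (rels_OJ q)"
   "fa_comm L Y \<otimes> X \<in> fa_ideal (rels_OJ q)" "X \<otimes> fa_comm L Y \<in> fa_ideal (rels_OJ q)"
   "fa_comm L X \<otimes> Y \<in> fa_ideal (rels_OJ q)" "Y \<otimes> fa_comm L X \<in> fa_ideal (rels_OJ q)"
   "fa_comm L X \<otimes> X \<in> fa_ideal (rels_OJ q)" "X \<otimes> fa_comm L X \<in> fa_ideal (rels_OJ q)"
  by (auto intro: fa_ideal.lmul fa_ideal.rmul genO fpoly_gen)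

lemma Lxi1: "fa_comm L xi1 \<in> fa_ideal (rels_OJ q)"
  by (rule Lcentral) (simp add: xi1_def fpolys)

lemma centA: "fpoly p \<Longrightarrow> fa_comm (fa_hom (psi q) (omegaA q)) p \<in> fa_ideal (rels_OJ q)"
proof (rule central[OF fpR_O fpoly_hom[OF psf fp_omega(1)]])
  show "fa_comm (fa_hom (psi q) (omegaA q)) (fa_gen g) \<in> fa_ideal (rels_OJ q)" for g
  proof (cases g)
    case GX then show ?thesis
      unfolding GX I4[OF q0 q4]
      by (simp add: fa_ideal.add smO subO genO LYm Lxi1)
  next
    case GY then show ?thesis
      unfolding GY I3[OF q0 q4]
      by (simp add: fa_ideal.add smO subO genO LYm Lxi1)
  next
    case GL then show ?thesis
      unfolding GL by (subst comm_anti) (simp add: smO Lcentral fpoly_hom[OF psf fp_omega(1)])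
  qed
qed

lemma centB: "fpoly p \<Longrightarrow> fa_comm (fa_hom (psi q) (omegaB q)) p \<in> fa_ideal (rels_OJ q)"
proof (rule central[OF fpR_O fpoly_hom[OF psf fp_omega(2)]])
  show "fa_comm (fa_hom (psi q) (omegaB q)) (fa_gen g) \<in> fa_ideal (rels_OJ q)" for g
  proof (cases g)
    case GX then show ?thesis
      unfolding GX I5[OF q0 q4]
      by (simp add: fa_ideal.add smO subO genO LYm Lxi1)
  next
    case GY then show ?thesis
      unfolding GY I6[OF q0 q4]
      by (simp add: fa_ideal.add smO subO genO LYm Lxi1)
  next
    case GL then show ?thesis
      unfolding GL by (subst comm_anti) (simp add: smO Lcentral fpoly_hom[OF psf fp_omega(2)])
  qed
qed

lemma centC: "fpoly p \<Longrightarrow> fa_comm (fa_hom (psi q) (omegaC q)) p \<in> fa_ideal (rels_OJ q)"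
proof (rule central[OF fpR_O fpoly_hom[OF psf fp_omega(3)]])
  show "fa_comm (fa_hom (psi q) (omegaC q)) (fa_gen g) \<in> fa_ideal (rels_OJ q)" for g
  proof (cases g)
    case GX then show ?thesis
      unfolding GX I1[OF q0 q4] by (simp add: smO genO)
  next
    case GY then show ?thesis
      unfolding GY I2[OF q0 q4] by (simp add: smO genO)
  next
    case GL then show ?thesis
      unfolding GL by (subst comm_anti) (simp add: smO Lcentral fpoly_hom[OF psf fp_omega(3)])
  qed
qed

lemma relD_to_O: "r \<in> rels_Delta q \<Longrightarrow> fa_hom (psi q) r \<in> fa_ideal (rels_OJ q)"
  unfolding rels_Delta_def
  by (auto simp: hom_comm[OF psf] hom_gen[OF psf] fp_omega fpoly_gen psf centA centB centC)

lemma genD: "fa_comm (omegaA q) (fa_gen g) \<in> fa_ideal (rels_Delta q)"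
   "fa_comm (omegaB q) (fa_gen g) \<in> fa_ideal (rels_Delta q)"
   "fa_comm (omegaC q) (fa_gen g) \<in> fa_ideal (rels_Delta q)"
  by (auto intro!: fa_ideal.gen simp: rels_Delta_def)

lemma Ccentral: "fpoly p \<Longrightarrow> fa_comm (omegaC q) p \<in> fa_ideal (rels_Delta q)"
  by (rule central[OF fpR_D fp_omega(3) genD(3)])

lemma CAm: "fa_comm (omegaC q) A \<otimes> A \<in> fa_ideal (rels_Delta q)" "A \<otimes> fa_comm (omegaC q) A \<in> fa_ideal (rels_Delta q)"
  "fa_comm (omegaC q) A \<otimes> B \<in> fa_ideal (rels_Delta q)" "B \<otimes> fa_comm (omegaC q) A \<in> fa_ideal (rels_Delta q)"
  "fa_comm (omegaC q) B \<otimes> A \<in> fa_ideal (rels_Delta q)" "A \<otimes> fa_comm (omegaC q) B \<in> fa_ideal (rels_Delta q)"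
  "fa_comm (omegaC q) B \<otimes> B \<in> fa_ideal (rels_Delta q)" "B \<otimes> fa_comm (omegaC q) B \<in> fa_ideal (rels_Delta q)"
  by (auto intro: fa_ideal.lmul fa_ideal.rmul genD fpoly_gen)

lemma Cxi: "fa_comm (omegaC q) (A \<otimes> B \<ominus> B \<otimes> A) \<in> fa_ideal (rels_Delta q)"
  by (rule Ccentral) (simp add: fpolys)

lemma relO_to_D: "r \<in> rels_OJ q \<Longrightarrow> fa_hom (phi q) r \<in> fa_ideal (rels_Delta q)"
  unfolding rels_OJ_def
  by (auto simp: D1[OF q0 q4] D2[OF q0 q4] D3[OF q0 q4] D4[OF q0 q4] D5[OF q0 q4] hLX hLY
        fa_ideal.add smD subD genD CAm Cxi)

end

theorem theorem10p3:
  fixes q :: "'k::field"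
  assumes "q \<noteq> 0" and "q ^ 4 \<noteq> 1"
  shows "(\<forall>p. fpoly p \<longrightarrow>
            (p \<in> fa_ideal (rels_OJ q) \<longleftrightarrow> fa_hom (phi q) p \<in> fa_ideal (rels_Delta q)))
       \<and> (\<forall>d. fpoly d \<longrightarrow>
            (\<exists>p. fpoly p \<and> d \<ominus> fa_hom (phi q) p \<in> fa_ideal (rels_Delta q)))"
proof -
  note q0 = assms(1) and q4 = assms(2)
  have inv1: "fa_hom (psi q) (phi q g) = fa_gen g" for g
  proof (cases g)
    case GX then show ?thesis by (simp add: phi_def hom_gen[OF psf] psi_def)
  next
    case GY then show ?thesis by (simp add: phi_def hom_gen[OF psf] psi_def)
  next
    case GL then show ?thesis
      by (simp add: phi_def gammaD_def hom_smul[OF psf] fp_omega R1[OF q0 q4])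
  qed
  have inv2: "fa_hom (phi q) (psi q g) = fa_gen g" for g
  proof (cases g)
    case GA then show ?thesis by (simp add: psi_def hom_gen[OF phf] phi_def)
  next
    case GB then show ?thesis by (simp add: psi_def hom_gen[OF phf] phi_def)
  next
    case GC then show ?thesis by (simp add: R2[OF q0 q4])
  qed
  have part1: "p \<in> fa_ideal (rels_OJ q) \<longleftrightarrow> fa_hom (phi q) p \<in> fa_ideal (rels_Delta q)"
    if p: "fpoly p" for p
  proof
    assume "p \<in> fa_ideal (rels_OJ q)"
    then show "fa_hom (phi q) p \<in> fa_ideal (rels_Delta q)"
      using hom_ideal[of "phi q", OF phf fpR_O fpR_D relO_to_D[OF q0 q4]] by blast
  next
    assume "fa_hom (phi q) p \<in> fa_ideal (rels_Delta q)"
    then have "fa_hom (psi q) (fa_hom (phi q) p) \<in> fa_ideal (rels_OJ q)"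
      using hom_ideal[of "psi q", OF psf fpR_D fpR_O relD_to_O[OF q0 q4]] by blast
    then show "p \<in> fa_ideal (rels_OJ q)"
      by (simp add: hom_hom[OF phf psf inv1 p])
  qed
  have part2: "\<exists>p. fpoly p \<and> d \<ominus> fa_hom (phi q) p \<in> fa_ideal (rels_Delta q)"
    if d: "fpoly d" for d
  proof (intro exI conjI)
    show "fpoly (fa_hom (psi q) d)" by (rule fpoly_hom[OF psf d])
    have "fa_hom (phi q) (fa_hom (psi q) d) = d" by (rule hom_hom[OF psf phf inv2 d])
    then show "d \<ominus> fa_hom (phi q) (fa_hom (psi q) d) \<in> fa_ideal (rels_Delta q)"
      by (simp add: fa_sub_def fa_ideal.zero)
  qed
  show ?thesis using part1 part2 by blast
qed
end
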